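(* Let $[m]=X_1\cup\dots\cup X_k$ with the $X_i$ pairwise disjoint sets of size $n$, let $v_i$ be the smallest element of $X_i$, and let $k\ge\ell\ge\ell'\ge t\ge1$. Suppose that $\mathcal{F}\subseteq\mathcal{H}(n,k,\ell)$ and $\mathcal{G}\subseteq\mathcal{H}(n,k,\ell')$ are shifted and cross $t$-intersecting. Then $\mathcal{A}(\mathcal{F})\subseteq\{A\subseteq[k]:|A|\le\ell\}$ and $\mathcal{A}(\mathcal{G})\subseteq\{A\subseteq[k]:|A|\le\ell'\}$ are cross $t$-intersecting.
   Context: Here $m=kn$ with the natural order on $[m]$. $\mathcal{H}(n,k,\ell)=\{H\subseteq[m]:|H|=\ell,\ |H\cap X_i|\le1\ \forall i\in[k]\}$. For a family $\mathcal{F}$ of subsets and $i<j$, the shifting operator is $s_{i,j}(\mathcal{F})=\{s_{i,j}(F):F\in\mathcal{F}\}$ where $s_{i,j}(F)=(F\setminus\{j\})\cup\{i\}$ if $j\in F$, $i\notin F$ and $(F\setminus\{j\})\cup\{i\}\notin\mathcal{F}$, and $s_{i,j}(F)=F$ otherwise. A family $\mathcal{F}\subseteq\mathcal{H}(n,k,\ell)$ is shifted if $s_{i,j}(\mathcal{F})=\mathcal{F}$ for all $i<j$ lying in the same $X_a$ for some $a\in[k]$. For $H\in\mathcal{H}(n,k,\ell)$, $A(H)=\{i\in[k]: H\cap X_i=\{v_i\}\}$, and $\mathcal{A}(\mathcal{F})=\{A(F):F\in\mathcal{F}\}$. Families $\mathcal{F},\mathcal{G}$ are cross $t$-intersecting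 if $|F\cap G|\ge t$ for all $F\in\mathcal{F},G\in\mathcal{G}$. *)

theory Defs
  imports Main
begin

definition H_fam :: "(nat \<Rightarrow> nat set) \<Rightarrow> nat \<Rightarrow> nat \<Rightarrow> nat \<Rightarrow> nat set set" where
  "H_fam X m k l = {H. H \<subseteq> {1..m} \<and> card H = l \<and> (\<forall>i\<in>{1..k}. card (H \<inter> X i) \<le> 1)}"

definition shift_set :: "nat \<Rightarrow> nat \<Rightarrow> nat set set \<Rightarrow> nat set \<Rightarrow> nat set" where
  "shift_set i j \<F> F =
     (if j \<in> F \<and> i \<notin> F \<and> (F - {j}) \<union> {i} \<notin> \<F> then (F - {j}) \<union> {i} else F)"

definition shift_fam :: "nat \<Rightarrow> nat \<Rightarrow> nat set set \<Rightarrow> nat set set" where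
  "shift_fam i j \<F> = shift_set i j \<F> ` \<F>"

definition shifted :: "(nat \<Rightarrow> nat set) \<Rightarrow> nat \<Rightarrow> nat set set \<Rightarrow> bool" where
  "shifted X k \<F> \<longleftrightarrow>
     (\<forall>a\<in>{1..k}. \<forall>i j. i \<in> X a \<and> j \<in> X a \<and> i < j \<longrightarrow> shift_fam i j \<F> = \<F>)"

definition A_of :: "(nat \<Rightarrow> nat set) \<Rightarrow> nat \<Rightarrow> nat set \<Rightarrow> nat set" where
  "A_of X k H = {i \<in> {1..k}. H \<inter> X i = {Min (X i)}}"

definition A_fam :: "(nat \<Rightarrow> nat set) \<Rightarrow> nat \<Rightarrow> nat set set \<Rightarrow> nat set set" where
  "A_fam X k \<F> = A_of X k ` \<F>"

definition cross_t_int :: "nat \<Rightarrow> 'a set set \<Rightarrow> 'a set set \<Rightarrow> bool" where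
  "cross_t_int t \<F> \<G> \<longleftrightarrow> (\<forall>F\<in>\<F>. \<forall>G\<in>\<G>. t \<le> card (F \<inter> G))"

end

theory Submission
  imports Defs
begin

lemma shift_mem:
  assumes "shifted X k \<F>" "a \<in> {1..k}" "v \<in> X a" "x \<in> X a" "v < x"
    "F \<in> \<F>" "x \<in> F" "v \<notin> F"
  shows "(F - {x}) \<union> {v} \<in> \<F>"
proof (rule ccontr)
  assume nin: "(F - {x}) \<union> {v} \<notin> \<F>"
  have "shift_fam v x \<F> = \<F>" using assms(1-5) unfolding shifted_def by blast
  hence "shift_set v x \<F> F \<in> \<F>" using assms(6) unfolding shift_fam_def by blast
  moreover have "shift_set v x \<F> F = (F - {x}) \<union> {v}"
    using nin assms(7,8) unfolding shift_set_def by simp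
  ultimately show False using nin by simp
qed

lemma single: "finite S \<Longrightarrow> card S \<le> 1 \<Longrightarrow> y \<in> S \<Longrightarrow> S = {y}"
  using card_le_Suc0_iff_eq by fastforce

theorem lemma3p2:
  fixes X :: "nat \<Rightarrow> nat set" and n k m l l' t :: nat
    and \<F> \<G> :: "nat set set"
  assumes m_def: "m = k * n"
    and cover: "(\<Union>i\<in>{1..k}. X i) = {1..m}"
    and disj: "\<forall>i\<in>{1..k}. \<forall>j\<in>{1..k}. i \<noteq> j \<longrightarrow> X i \<inter> X j = {}"
    and size: "\<forall>i\<in>{1..k}. card (X i) = n"
    and params: "k \<ge> l" "l \<ge> l'" "l' \<ge> t" "t \<ge> 1"
    and F_sub: "\<F> \<subseteq> H_fam X m k l"
    and G_sub: "\<G> \<subseteq> H_fam X m k l'"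
    and F_sh: "shifted X k \<F>"
    and G_sh: "shifted X k \<G>"
    and cross: "cross_t_int t \<F> \<G>"
  shows "A_fam X k \<F> \<subseteq> {A. A \<subseteq> {1..k} \<and> card A \<le> l} \<and>
         A_fam X k \<G> \<subseteq> {A. A \<subseteq> {1..k} \<and> card A \<le> l'} \<and>
         cross_t_int t (A_fam X k \<F>) (A_fam X k \<G>)"
proof -
  have fin: "finite (X i)" if "i \<in> {1..k}" for i
  proof -
    have "X i \<subseteq> {1..m}" using cover that by blast
    thus ?thesis using finite_subset by blast
  qed
  have minmem: "Min (X i) \<in> X i" if "i \<in> {1..k}" "x \<in> X i" for i x
    using fin[OF that(1)] that(2) by (intro Min_in) auto
  have minle: "Min (X i) \<le> x" if "i \<in> {1..k}" "x \<in> X i" for i x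
    using fin[OF that(1)] that(2) by simp
  have inj: "i = j" if h: "i \<in> {1..k}" "j \<in> {1..k}" "Min (X i) = Min (X j)" "X i \<noteq> {}" "X j \<noteq> {}" for i j
  proof (rule ccontr)
    assume "i \<noteq> j"
    hence e: "X i \<inter> X j = {}" using disj h(1,2) by blast
    obtain z where "z \<in> X i" using h(4) by blast
    hence "Min (X i) \<in> X i" using minmem h(1) by blast
    moreover have "Min (X j) \<in> X j" using minmem h(2,5) by blast
    ultimately show False using h(3) e by auto
  qed
  define Mins where "Mins = (\<lambda>i. Min (X i)) ` {1..k}"
  have injon: "inj_on (\<lambda>i. Min (X i)) (A_of X k H)" for H
  proof (rule inj_onI)
    fix i j assume hi: "i \<in> A_of X k H" and hj: "j \<in> A_of X k H" and e: "Min (X i) = Min (X j)"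
    have "X i \<noteq> {}" "i \<in> {1..k}" using hi unfolding A_of_def by auto
    moreover have "X j \<noteq> {}" "j \<in> {1..k}" using hj unfolding A_of_def by auto
    ultimately show "i = j" using inj[of i j] e by simp
  qed
  have Asub: "(\<lambda>i. Min (X i)) ` A_of X k H \<subseteq> H" for H
    unfolding A_of_def by blast
  have cardA: "card (A_of X k H) \<le> card H" if "finite H" for H
    using card_inj_on_le[OF injon Asub that] .
  have part1: "A_fam X k \<F> \<subseteq> {A. A \<subseteq> {1..k} \<and> card A \<le> l}"
  proof
    fix A assume "A \<in> A_fam X k \<F>"
    then obtain F where F: "F \<in> \<F>" "A = A_of X k F" unfolding A_fam_def by blast
    have "F \<subseteq> {1..m}" "card F = l" using F_sub F unfolding H_fam_def by auto
    hence "finite F" using finite_subset by blast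
    thus "A \<in> {A. A \<subseteq> {1..k} \<and> card A \<le> l}"
      using cardA F \<open>card F = l\<close> unfolding A_of_def by auto
  qed
  have part2: "A_fam X k \<G> \<subseteq> {A. A \<subseteq> {1..k} \<and> card A \<le> l'}"
  proof
    fix A assume "A \<in> A_fam X k \<G>"
    then obtain F where F: "F \<in> \<G>" "A = A_of X k F" unfolding A_fam_def by blast
    have "F \<subseteq> {1..m}" "card F = l'" using G_sub F unfolding H_fam_def by auto
    hence "finite F" using finite_subset by blast
    thus "A \<in> {A. A \<subseteq> {1..k} \<and> card A \<le> l'}"
      using cardA F \<open>card F = l'\<close> unfolding A_of_def by auto
  qed
  have key: "t \<le> card (F \<inter> G \<inter> Mins)" if G: "G \<in> \<G>" and F: "F \<in> \<F>" for F G
  proof -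
    have GH: "G \<subseteq> {1..m}" "\<forall>i\<in>{1..k}. card (G \<inter> X i) \<le> 1"
      using G_sub G unfolding H_fam_def by auto
    have "\<forall>F\<in>\<F>. card (F \<inter> G - Mins) = d \<longrightarrow> t \<le> card (F \<inter> G \<inter> Mins)" for d
    proof (induction d)
      case 0
      show ?case
      proof (intro ballI impI)
        fix F assume F: "F \<in> \<F>" "card (F \<inter> G - Mins) = 0"
        have "finite G" using GH finite_subset by blast
        hence "F \<inter> G - Mins = {}" using F by simp
        hence "F \<inter> G \<inter> Mins = F \<inter> G" by blast
        thus "t \<le> card (F \<inter> G \<inter> Mins)" using cross F unfolding cross_t_int_def using G by simp
      qed
    next
      case (Suc d)
      show ?case
      proof (intro ballI impI)
        fix F assume F: "F \<in> \<F>" "card (F \<inter> G - Mins) = Suc d"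
        have FH: "F \<subseteq> {1..m}" "\<forall>i\<in>{1..k}. card (F \<inter> X i) \<le> 1"
          using F_sub F unfolding H_fam_def by auto
        have finG: "finite G" using GH finite_subset by blast
        have "F \<inter> G - Mins \<noteq> {}" using F(2) by (metis card.empty nat.simps(3))
        then obtain x where x: "x \<in> F \<inter> G - Mins" by blast
        obtain a where a: "a \<in> {1..k}" "x \<in> X a" using x FH(1) cover by blast
        define v where "v = Min (X a)"
        have vX: "v \<in> X a" using minmem a v_def by blast
        have vM: "v \<in> Mins" using a v_def Mins_def by blast
        have vx: "v < x" using minle[OF a] x vM unfolding v_def by (cases "Min (X a) = x") auto
        have finFa: "finite (F \<inter> X a)" using fin a by blast
        have finGa: "finite (G \<inter> X a)" using fin a by blast
        have vF: "v \<notin> F"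
        proof
          assume "v \<in> F"
          hence "{v, x} \<subseteq> F \<inter> X a" using x a vX by blast
          hence "card {v, x} \<le> card (F \<inter> X a)" using finFa card_mono by blast
          thus False using FH(2)[rule_format, OF a(1)] vx by simp
        qed
        have vG: "v \<notin> G"
        proof
          assume "v \<in> G"
          hence "{v, x} \<subseteq> G \<inter> X a" using x a vX by blast
          hence "card {v, x} \<le> card (G \<inter> X a)" using finGa card_mono by blast
          thus False using GH(2)[rule_format, OF a(1)] vx by simp
        qed
        define F' where "F' = (F - {x}) \<union> {v}"
        have F'in: "F' \<in> \<F>" unfolding F'_def
          using shift_mem[OF F_sh a(1) vX a(2) vx F(1)] x vF by blast
        have e1: "F' \<inter> G - Mins = (F \<inter> G - Mins) - {x}" unfolding F'_def using vM by blast
        have e2: "F' \<inter> G \<inter> Mins = F \<inter> G \<inter> Mins" unfolding F'_def using vG x by blast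
        have "card (F' \<inter> G - Mins) = d" using e1 F(2) x finG by simp
        thus "t \<le> card (F \<inter> G \<inter> Mins)" using Suc.IH F'in e2 by auto
      qed
    qed
    thus ?thesis using F by blast
  qed
  have part3: "cross_t_int t (A_fam X k \<F>) (A_fam X k \<G>)"
    unfolding cross_t_int_def
  proof (intro ballI)
    fix A B assume A: "A \<in> A_fam X k \<F>" and B: "B \<in> A_fam X k \<G>"
    obtain F where F: "F \<in> \<F>" "A = A_of X k F" using A unfolding A_fam_def by blast
    obtain G where G: "G \<in> \<G>" "B = A_of X k G" using B unfolding A_fam_def by blast
    have FH: "F \<subseteq> {1..m}" "\<forall>i\<in>{1..k}. card (F \<inter> X i) \<le> 1"
      using F_sub F unfolding H_fam_def by auto
    have GH: "G \<subseteq> {1..m}" "\<forall>i\<in>{1..k}. card (G \<inter> X i) \<le> 1"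
      using G_sub G unfolding H_fam_def by auto
    have "F \<inter> G \<inter> Mins \<subseteq> (\<lambda>i. Min (X i)) ` (A \<inter> B)"
    proof
      fix y assume y: "y \<in> F \<inter> G \<inter> Mins"
      then obtain i where i: "i \<in> {1..k}" "y = Min (X i)" unfolding Mins_def by blast
      have yF: "y \<in> F" "y \<in> G" using y by auto
      have "X i \<noteq> {}"
      proof
        assume "X i = {}"
        hence "n = 0" using size[rule_format, OF i(1)] by simp
        hence "m = 0" using m_def by simp
        thus False using yF(1) FH(1) by auto
      qed
      hence yX: "y \<in> X i" using minmem i by blast
      have c1: "F \<inter> X i = {y}"
      proof -
        have f1: "finite (F \<inter> X i)" using fin i by blast
        have f2: "y \<in> F \<inter> X i" using yF yX by blast
        show ?thesis by (rule single[OF f1 FH(2)[rule_format, OF i(1)] f2])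
      qed
      have c2: "G \<inter> X i = {y}"
      proof -
        have f1: "finite (G \<inter> X i)" using fin i by blast
        have f2: "y \<in> G \<inter> X i" using yF yX by blast
        show ?thesis by (rule single[OF f1 GH(2)[rule_format, OF i(1)] f2])
      qed
      have "i \<in> A \<inter> B" using F(2) G(2) c1 c2 i unfolding A_of_def by auto
      thus "y \<in> (\<lambda>i. Min (X i)) ` (A \<inter> B)" using i by blast
    qed
    moreover have finAB: "finite (A \<inter> B)"
    proof -
      have "A \<subseteq> {1..k}" using part1 A by blast
      thus ?thesis using finite_subset by blast
    qed
    ultimately have "card (F \<inter> G \<inter> Mins) \<le> card ((\<lambda>i. Min (X i)) ` (A \<inter> B))"
      by (simp add: card_mono)
    also have "\<dots> \<le> card (A \<inter> B)" using finAB card_image_le by blast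
    finally have "card (F \<inter> G \<inter> Mins) \<le> card (A \<inter> B)" .
    thus "t \<le> card (A \<inter> B)" using key[OF G(1) F(1)] by simp
  qed
  show ?thesis using part1 part2 part3 by blast
qed

end
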